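(* Let $1<p_1,\ldots,p_m<\infty$ and let $f\in\mathbb{R}^{d_1\times\cdots\times d_m}$, $f\ge0$, be weakly irreducible. Suppose there is $i\in[m]$ such that $(m-1)p_i'\le p_k$ for every $k\in[m]\setminus\{i\}$. Then $f$ has a strictly positive singular vector $\mathbf x^*>0$ with $Q(\mathbf x^* )=\|f\|_{p_1,\ldots,p_m}$.
   Context: $f$ is identified with the multilinear form $f(\mathbf x)=\sum f_{j_1,\ldots,j_m}x_{1,j_1}\cdots x_{m,j_m}$ on $\prod_k\mathbb{R}^{d_k}$. $p'=p/(p-1)$. $Q(\mathbf x)=|f(\mathbf x)|/\prod_k\|\mathbf x_k\|_{p_k}$, $\|f\|_{p_1,\ldots,p_m}=\max Q$; singular vectors are critical points of $Q$ (with $f(\mathbf x)\ne0$). Weak irreducibility: the undirected graph on $\bigcup_k\{k\}\times[d_k]$ with $(k,j_k)\sim(l,j_l)$ ($k\ne l$) iff $f_{j_1,\ldots,j_m}>0$ for some choice of the remaining indices, is connected. *)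

theory Defs
  imports "HOL-Analysis.Analysis"
begin

text \<open>An order-m tensor with dimensions d 0, ..., d (m-1) is a function on
multi-indices J (with J k < d k for k < m); a tuple of vectors x is
x :: nat => nat => real, the k-th vector being x k (entries j < d k).\<close>

definition multi_idx :: "nat \<Rightarrow> (nat \<Rightarrow> nat) \<Rightarrow> (nat \<Rightarrow> nat) set" where
  "multi_idx m d = PiE {0..<m} (\<lambda>k. {0..<d k})"

definition mform :: "nat \<Rightarrow> (nat \<Rightarrow> nat) \<Rightarrow> ((nat \<Rightarrow> nat) \<Rightarrow> real)
    \<Rightarrow> (nat \<Rightarrow> nat \<Rightarrow> real) \<Rightarrow> real" where
  "mform m d f x = (\<Sum>J\<in>multi_idx m d. f J * (\<Prod>k<m. x k (J k)))"

definition pnorm :: "real \<Rightarrow> nat \<Rightarrow> (nat \<Rightarrow> real) \<Rightarrow> real" where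
  "pnorm p n v = (\<Sum>j<n. \<bar>v j\<bar> powr p) powr (1 / p)"

definition Qfun :: "nat \<Rightarrow> (nat \<Rightarrow> nat) \<Rightarrow> (nat \<Rightarrow> real) \<Rightarrow> ((nat \<Rightarrow> nat) \<Rightarrow> real)
    \<Rightarrow> (nat \<Rightarrow> nat \<Rightarrow> real) \<Rightarrow> real" where
  "Qfun m d p f x = \<bar>mform m d f x\<bar> / (\<Prod>k<m. pnorm (p k) (d k) (x k))"

definition admissible :: "nat \<Rightarrow> (nat \<Rightarrow> nat) \<Rightarrow> (nat \<Rightarrow> nat \<Rightarrow> real) \<Rightarrow> bool" where
  "admissible m d x \<longleftrightarrow> (\<forall>k<m. \<exists>j<d k. x k j \<noteq> 0)"

definition tnorm :: "nat \<Rightarrow> (nat \<Rightarrow> nat) \<Rightarrow> (nat \<Rightarrow> real) \<Rightarrow> ((nat \<Rightarrow> nat) \<Rightarrow> real) \<Rightarrow> real" where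
  "tnorm m d p f = Sup {Qfun m d p f x | x. admissible m d x}"

definition critical_Q :: "nat \<Rightarrow> (nat \<Rightarrow> nat) \<Rightarrow> (nat \<Rightarrow> real) \<Rightarrow> ((nat \<Rightarrow> nat) \<Rightarrow> real)
    \<Rightarrow> (nat \<Rightarrow> nat \<Rightarrow> real) \<Rightarrow> bool" where
  "critical_Q m d p f x \<longleftrightarrow> (\<forall>k<m. \<forall>j<d k.
     ((\<lambda>t. Qfun m d p f (x(k := (x k)(j := x k j + t)))) has_real_derivative 0) (at 0))"

definition singular_vector :: "nat \<Rightarrow> (nat \<Rightarrow> nat) \<Rightarrow> (nat \<Rightarrow> real) \<Rightarrow> ((nat \<Rightarrow> nat) \<Rightarrow> real)
    \<Rightarrow> (nat \<Rightarrow> nat \<Rightarrow> real) \<Rightarrow> bool" where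
  "singular_vector m d p f x \<longleftrightarrow>
     admissible m d x \<and> mform m d f x \<noteq> 0 \<and> critical_Q m d p f x"

definition wi_vertices :: "nat \<Rightarrow> (nat \<Rightarrow> nat) \<Rightarrow> (nat \<times> nat) set" where
  "wi_vertices m d = {(k, j). k < m \<and> j < d k}"

definition wi_edge :: "nat \<Rightarrow> (nat \<Rightarrow> nat) \<Rightarrow> ((nat \<Rightarrow> nat) \<Rightarrow> real)
    \<Rightarrow> nat \<times> nat \<Rightarrow> nat \<times> nat \<Rightarrow> bool" where
  "wi_edge m d f u v \<longleftrightarrow> u \<in> wi_vertices m d \<and> v \<in> wi_vertices m d \<and> fst u \<noteq> fst v \<and>
     (\<exists>J\<in>multi_idx m d. J (fst u) = snd u \<and> J (fst v) = snd v \<and> f J > 0)"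

definition weakly_irreducible :: "nat \<Rightarrow> (nat \<Rightarrow> nat) \<Rightarrow> ((nat \<Rightarrow> nat) \<Rightarrow> real) \<Rightarrow> bool" where
  "weakly_irreducible m d f \<longleftrightarrow>
     (\<forall>u\<in>wi_vertices m d. \<forall>v\<in>wi_vertices m d. (wi_edge m d f)\<^sup>*\<^sup>* u v)"

end

theory Submission
  imports Defs
begin


lemma cont_eval2[continuous_intros]: "continuous_on S (\<lambda>x::nat\<Rightarrow>nat\<Rightarrow>real. x q i)"
proof -
  have "continuous_on UNIV ((\<lambda>y::nat\<Rightarrow>real. y i) \<circ> (\<lambda>x::nat\<Rightarrow>nat\<Rightarrow>real. x q))"
    by (rule continuous_on_compose) (auto intro: continuous_on_subset[OF continuous_on_product_coordinates])
  then show ?thesis by (auto simp add: o_def intro: continuous_on_subset)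
qed

lemma compact_box:
  fixes C :: "nat \<Rightarrow> nat \<Rightarrow> real set"
  assumes "\<And>q i. compact (C q i)"
  shows "compact (PiE UNIV (\<lambda>q. PiE UNIV (\<lambda>i. C q i)))"
proof -
  have "\<And>q. compactin euclidean (PiE UNIV (\<lambda>i. C q i))"
    using assms by (simp flip: euclidean_product_topology add: compactin_PiE)
  then have "compactin (product_topology (\<lambda>q. euclidean) UNIV) (PiE UNIV (\<lambda>q. PiE UNIV (\<lambda>i. C q i)))"
    by (simp add: compactin_PiE)
  then show ?thesis by (simp add: euclidean_product_topology)
qed

lemma multi_idx_mem: "J \<in> multi_idx m d \<Longrightarrow> k < m \<Longrightarrow> J k < d k"
  unfolding multi_idx_def by (auto simp: PiE_iff)

lemma finite_multi_idx: "finite (multi_idx m d)"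
  unfolding multi_idx_def by (auto intro: finite_PiE)

lemma mform_cong:
  assumes "\<And>k j. k < m \<Longrightarrow> j < d k \<Longrightarrow> x k j = y k j"
  shows "mform m d f x = mform m d f y"
proof -
  have "\<And>J. J \<in> multi_idx m d \<Longrightarrow> (\<Prod>k<m. x k (J k)) = (\<Prod>k<m. y k (J k))"
    by (rule prod.cong) (auto intro: assms multi_idx_mem)
  then show ?thesis unfolding mform_def by (intro sum.cong) auto
qed

lemma pnorm_cong:
  assumes "\<And>j. j < n \<Longrightarrow> v j = w j"
  shows "pnorm p n v = pnorm p n w"
  unfolding pnorm_def using assms by (auto intro!: sum.cong)

lemma abs_mform_le:
  assumes "\<forall>J\<in>multi_idx m d. f J \<ge> 0"
  shows "\<bar>mform m d f x\<bar> \<le> mform m d f (\<lambda>k j. \<bar>x k j\<bar>)"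
proof -
  have "\<bar>mform m d f x\<bar> \<le> (\<Sum>J\<in>multi_idx m d. \<bar>f J * (\<Prod>k<m. x k (J k))\<bar>)"
    unfolding mform_def by (rule sum_abs)
  also have "\<dots> = mform m d f (\<lambda>k j. \<bar>x k j\<bar>)"
    unfolding mform_def using assms by (intro sum.cong) (auto simp: abs_mult abs_prod)
  finally show ?thesis .
qed

lemma mform_scale:
  "mform m d f (\<lambda>k j. c k * z k j) = (\<Prod>k<m. c k) * mform m d f z"
  unfolding mform_def by (simp add: prod.distrib sum_distrib_left ac_simps)

lemma mform_nonneg:
  assumes "\<forall>J\<in>multi_idx m d. f J \<ge> 0" "\<And>k j. k < m \<Longrightarrow> j < d k \<Longrightarrow> 0 \<le> x k j"
  shows "0 \<le> mform m d f x"
  unfolding mform_def using assms multi_idx_mem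
  by (intro sum_nonneg mult_nonneg_nonneg prod_nonneg) auto

lemma pnorm_pos:
  assumes "0 < p" "j < n" "v j \<noteq> 0"
  shows "0 < pnorm p n v"
proof -
  have "0 < (\<Sum>j<n. \<bar>v j\<bar> powr p)"
    using assms by (intro sum_pos2[of _ j]) auto
  then show ?thesis unfolding pnorm_def by simp
qed

lemma pnorm_le1:
  assumes "0 < p" "(\<Sum>j<n. \<bar>v j\<bar> powr p) \<le> 1"
  shows "pnorm p n v \<le> 1"
  unfolding pnorm_def using assms by (intro powr_le1) (auto simp: sum_nonneg)

lemma pnorm_powr:
  assumes "0 < p"
  shows "pnorm p n v powr p = (\<Sum>j<n. \<bar>v j\<bar> powr p)"
  unfolding pnorm_def using assms by (simp add: powr_powr powr_one sum_nonneg)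

lemma ex_deriv_sum:
  assumes "finite A" "\<forall>a\<in>A. \<exists>D. DERIV (F a) z :> D"
  shows "\<exists>D. DERIV (\<lambda>t. \<Sum>a\<in>A. F a t) z :> D"
proof -
  obtain D where D: "\<forall>a\<in>A. DERIV (F a) z :> D a" using bchoice[OF assms(2)] by blast
  have "DERIV (\<lambda>t. \<Sum>a\<in>A. F a t) z :> (\<Sum>a\<in>A. D a)"
    by (rule DERIV_sum) (use D in auto)
  then show ?thesis by blast
qed

lemma ex_deriv_prod:
  assumes "\<forall>a\<in>A. \<exists>D. DERIV (F a) z :> D"
  shows "\<exists>D. DERIV (\<lambda>t. \<Prod>a\<in>A. F a t) z :> D"
proof -
  obtain D where D: "\<forall>a\<in>A. DERIV (F a) z :> D a" using bchoice[OF assms(1)] by blast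
  show ?thesis using has_field_derivative_prod[of A F D z] D by blast
qed

lemma ex_deriv_powr:
  fixes g :: "real \<Rightarrow> real" and c :: real
  assumes "DERIV g z :> D" "0 < g z"
  shows "\<exists>D. DERIV (\<lambda>t. g t powr c) z :> D"
  using DERIV_powr[OF assms DERIV_const[of c "at z"]] by blast

lemma ex_deriv_cmult:
  assumes "\<exists>D. DERIV g z :> D"
  shows "\<exists>D. DERIV (\<lambda>t. c * g t) z :> D"
  using assms DERIV_cmult by blast

lemma ex_deriv_divide:
  assumes "\<exists>D. DERIV g z :> D" "\<exists>D. DERIV h z :> D" "h z \<noteq> 0"
  shows "\<exists>D. DERIV (\<lambda>t. g t / h t) z :> D"
  using assms DERIV_divide by blast



lemma sum_inv_lt1:
  fixes p :: "nat \<Rightarrow> real"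
  assumes m2: "m \<ge> 2" and p1: "\<forall>k<m. 1 < p k" and i: "i < m"
    and hc: "\<forall>k<m. k \<noteq> i \<longrightarrow> real (m - 1) * (p i / (p i - 1)) \<le> p k"
    and K: "K \<subseteq> {..<m}" and l: "l < m" "l \<notin> K"
  shows "(\<Sum>q\<in>K. 1 / p q) < 1"
proof -
  define a where "a = (p i - 1) / (real (m - 1) * p i)"
  have pi: "1 < p i" using p1 i by auto
  have rm: "real (m - 1) = real m - 1" using m2 by auto
  have mpos: "real m - 1 > 0" using m2 by auto
  have apos: "a > 0" unfolding a_def using pi mpos rm by (auto intro!: divide_pos_pos)
  have ab: "1 / p q \<le> a" if "q < m" "q \<noteq> i" for q
  proof -
    have "real (m - 1) * (p i / (p i - 1)) \<le> p q" using hc that by auto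
    moreover have "0 < real (m - 1) * (p i / (p i - 1))" using pi mpos rm by auto
    moreover have "0 < p q" using p1 that by auto
    ultimately have "1 / p q \<le> 1 / (real (m - 1) * (p i / (p i - 1)))"
      using m2 pi by (intro divide_left_mono mult_pos_pos) auto
    also have "\<dots> = a" unfolding a_def using pi by (simp add: field_simps)
    finally show ?thesis .
  qed
  have fK: "finite K" using K finite_subset by blast
  have ma: "(real m - 1) * a = (p i - 1) / p i" unfolding a_def using rm mpos pi by (simp add: field_simps)
  show ?thesis
  proof (cases "i \<in> K")
    case False
    have "(\<Sum>q\<in>K. 1 / p q) \<le> (\<Sum>q\<in>K. a)" using K False ab by (intro sum_mono) auto
    also have "\<dots> = real (card K) * a" by simp
    also have "card K \<le> card ({..<m} - {l})" using K l by (intro card_mono) auto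
    then have "real (card K) \<le> real m - 1" using l by auto
    then have "real (card K) * a \<le> (real m - 1) * a" using apos by (intro mult_right_mono) auto
    also have "\<dots> < 1" using ma pi by simp
    finally show ?thesis by linarith
  next
    case True
    have c1: "card (K - {i}) \<le> card ({..<m} - {i, l})" using K l by (intro card_mono) auto
    have c2: "card ({..<m} - {i, l}) = m - 2"
    proof -
      have "i \<noteq> l" using True l by auto
      then show ?thesis using l i by (subst card_Diff_subset) auto
    qed
    have "card (K - {i}) \<le> m - 2" using c1 c2 by simp
    then have "real (card (K - {i})) \<le> real (m - 2)" by linarith
    then have cr: "real (card (K - {i})) \<le> real m - 2" using m2 by (simp add: of_nat_diff)
    have "(\<Sum>q\<in>K. 1 / p q) = 1 / p i + (\<Sum>q\<in>K - {i}. 1 / p q)"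
      using True fK by (simp add: sum.remove)
    also have "(\<Sum>q\<in>K - {i}. 1 / p q) \<le> (\<Sum>q\<in>K - {i}. a)" using K ab by (intro sum_mono) auto
    also have "\<dots> = real (card (K - {i})) * a" by simp
    also have "real (card (K - {i})) * a \<le> (real m - 2) * a" using apos cr by (intro mult_right_mono) auto
    finally have "(\<Sum>q\<in>K. 1 / p q) \<le> 1 / p i + (real m - 2) * a" by simp
    also have "\<dots> < 1 / p i + (real m - 1) * a" using apos by simp
    also have "\<dots> = 1" using ma pi by (simp add: field_simps)
    finally show ?thesis .
  qed
qed

definition inB :: "nat \<Rightarrow> (nat \<Rightarrow> nat) \<Rightarrow> (nat \<Rightarrow> real) \<Rightarrow> (nat \<Rightarrow> nat \<Rightarrow> real) \<Rightarrow> bool" where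
  "inB m d p x \<longleftrightarrow> (\<forall>q i. \<not> (q < m \<and> i < d q) \<longrightarrow> x q i = 0) \<and>
     (\<forall>q<m. (\<Sum>i<d q. \<bar>x q i\<bar> powr p q) \<le> 1)"

lemma Q_bound:
  assumes f0: "\<forall>J\<in>multi_idx m d. f J \<ge> 0" and p0: "\<forall>k<m. 0 < p k"
    and maxB: "\<And>z. inB m d p z \<Longrightarrow> mform m d f z \<le> M"
    and adm: "admissible m d y"
  shows "Qfun m d p f y \<le> M"
proof -
  define n where "n q = pnorm (p q) (d q) (y q)" for q
  have npos: "0 < n q" if "q < m" for q
  proof -
    from adm that obtain j where "j < d q" "y q j \<noteq> 0" unfolding admissible_def by blast
    then show ?thesis unfolding n_def using p0 that by (intro pnorm_pos) auto
  qed
  define z where "z q i = (if q < m \<and> i < d q then \<bar>y q i\<bar> / n q else 0)" for q i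
  have zB: "inB m d p z"
    unfolding inB_def
  proof (intro conjI allI impI)
    fix q i assume "\<not> (q < m \<and> i < d q)" then show "z q i = 0" by (auto simp: z_def)
  next
    fix q assume q: "q < m"
    have "(\<Sum>i<d q. \<bar>z q i\<bar> powr p q) = (\<Sum>i<d q. \<bar>y q i\<bar> powr p q / n q powr p q)"
      using q npos[OF q] by (intro sum.cong) (auto simp: z_def powr_divide)
    also have "\<dots> = (\<Sum>i<d q. \<bar>y q i\<bar> powr p q) / n q powr p q" by (simp add: sum_divide_distrib)
    also have "\<dots> = 1" unfolding n_def using p0 q npos[OF q]
      by (simp add: pnorm_powr) (metis n_def order_less_irrefl pnorm_powr powr_gt_zero)
    finally show "(\<Sum>i<d q. \<bar>z q i\<bar> powr p q) \<le> 1" by simp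
  qed
  have "mform m d f (\<lambda>k j. \<bar>y k j\<bar>) = mform m d f (\<lambda>k j. n k * z k j)"
    using npos by (intro mform_cong) (force simp: z_def)
  also have "\<dots> = (\<Prod>k<m. n k) * mform m d f z" by (rule mform_scale)
  finally have e: "mform m d f (\<lambda>k j. \<bar>y k j\<bar>) = (\<Prod>k<m. n k) * mform m d f z" .
  have Ppos: "0 < (\<Prod>k<m. n k)" using npos by (intro prod_pos) auto
  have "\<bar>mform m d f y\<bar> \<le> (\<Prod>k<m. n k) * M"
    using abs_mform_le[OF f0, of y] e maxB[OF zB] Ppos by (metis mult_left_mono order_trans less_imp_le)
  then show ?thesis unfolding Qfun_def n_def[symmetric] using Ppos by (simp add: pos_divide_le_eq mult.commute)
qed



lemma perturb:
  fixes xs :: "nat \<Rightarrow> nat \<Rightarrow> real"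
  assumes f0: "\<forall>J\<in>multi_idx m d. f J \<ge> 0" and p1: "\<forall>k<m. 1 < p k"
    and xnn: "\<And>q i. 0 \<le> xs q i"
    and xB: "\<forall>q<m. (\<Sum>i<d q. \<bar>xs q i\<bar> powr p q) \<le> 1"
    and xadm: "admissible m d xs"
    and Mdef: "mform m d f xs = M" and Mpos: "0 < M"
    and bound: "\<And>y. admissible m d y \<Longrightarrow> Qfun m d p f y \<le> M"
    and J: "J \<in> multi_idx m d" "f J > 0"
    and k: "k < m" "xs k (J k) = 0"
    and slt: "(\<Sum>q\<in>{q\<in>{..<m}. xs q (J q) = 0}. 1 / p q) < 1"
  shows False
proof -
  define K where "K = {q\<in>{..<m}. xs q (J q) = 0}"
  have kK: "k \<in> K" using k by (simp add: K_def)
  have Km: "K \<subseteq> {..<m}" by (auto simp: K_def)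
  have fK: "finite K" using Km finite_subset by blast
  define s where "s = (\<Sum>q\<in>K. 1 / p q)"
  have s1: "s < 1" using slt by (simp add: s_def K_def)
  have s0: "0 < s" unfolding s_def using kK fK p1 Km
    by (intro sum_pos2[of _ k]) (auto intro: less_imp_le)
  define c where "c = f J * (\<Prod>q\<in>{..<m} - K. xs q (J q))"
  have c0: "0 < c" unfolding c_def using J(2)
    by (intro mult_pos_pos prod_pos) (auto simp: K_def intro: order.not_eq_order_implies_strict xnn)
  define t where "t = (c / (2 * M)) powr (1 / (1 - s))"
  have t0: "0 < t" unfolding t_def using c0 Mpos by simp
  have tps: "t powr (1 - s) = c / (2 * M)"
    unfolding t_def using s1 c0 Mpos by (simp add: powr_powr powr_one)
  have "t = t powr (1 - s) * t powr s" using t0 by (simp flip: powr_add)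
  then have "M * t * 2 = c * t powr s" using tps Mpos c0 t0 by (simp add: field_simps)
  moreover have "0 < M * t" using Mpos t0 by simp
  ultimately have tle: "M * t < c * t powr s" by linarith
  define y where "y q i = (if q \<in> K \<and> i = J q then t powr (1 / p q) else xs q i)" for q i
  have xy: "xs q i \<le> y q i" for q i using t0 by (auto simp: y_def K_def)
  have ynn: "0 \<le> y q i" for q i using xy xnn order_trans by blast
  have yadm: "admissible m d y"
    unfolding admissible_def
  proof (intro allI impI)
    fix q assume "q < m"
    then obtain i where "i < d q" "xs q i \<noteq> 0" using xadm unfolding admissible_def by blast
    then show "\<exists>i<d q. y q i \<noteq> 0" using xy[of q i] xnn[of q i] by (intro exI[of _ i]) auto
  qed
  have PJ: "(\<Prod>q<m. y q (J q)) = t powr s * (\<Prod>q\<in>{..<m} - K. xs q (J q))"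
  proof -
    have "(\<Prod>q<m. y q (J q)) = (\<Prod>q\<in>{..<m} - K. y q (J q)) * (\<Prod>q\<in>K. y q (J q))"
      using Km by (intro prod.subset_diff) auto
    also have "(\<Prod>q\<in>K. y q (J q)) = (\<Prod>q\<in>K. t powr (1 / p q))"
      by (intro prod.cong) (auto simp: y_def)
    also have "\<dots> = t powr s" unfolding s_def using t0 by (simp add: powr_sum)
    also have "(\<Prod>q\<in>{..<m} - K. y q (J q)) = (\<Prod>q\<in>{..<m} - K. xs q (J q))"
      by (intro prod.cong) (auto simp: y_def)
    finally show ?thesis by simp
  qed
  have PJx: "(\<Prod>q<m. xs q (J q)) = 0" using kK Km k by (intro prod_zero) (auto simp: K_def)
  have mono_terms: "0 \<le> f J' * (\<Prod>q<m. y q (J' q)) - f J' * (\<Prod>q<m. xs q (J' q))"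
    if "J' \<in> multi_idx m d" for J'
  proof -
    have "(\<Prod>q<m. xs q (J' q)) \<le> (\<Prod>q<m. y q (J' q))"
      using xnn xy by (intro prod_mono) auto
    then show ?thesis using f0 that by (simp add: mult_left_mono)
  qed
  have "mform m d f y - mform m d f xs
        = (\<Sum>J'\<in>multi_idx m d. f J' * (\<Prod>q<m. y q (J' q)) - f J' * (\<Prod>q<m. xs q (J' q)))"
    unfolding mform_def by (simp add: sum_subtractf)
  also have "\<dots> \<ge> f J * (\<Prod>q<m. y q (J q)) - f J * (\<Prod>q<m. xs q (J q))"
    using J(1) mono_terms finite_multi_idx by (intro member_le_sum) auto
  finally have "mform m d f y \<ge> M + c * t powr s"
    using PJ PJx Mdef by (simp add: c_def ac_simps)
  define g where "g q = (if q \<in> K then (1 + t) powr (1 / p q) else 1)" for q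
  have pn_le: "pnorm (p q) (d q) (y q) \<le> g q" if q: "q < m" for q
  proof (cases "q \<in> K")
    case True
    have Jq: "J q < d q" using J(1) q by (rule multi_idx_mem)
    have "(\<Sum>i<d q. \<bar>y q i\<bar> powr p q) = \<bar>y q (J q)\<bar> powr p q + (\<Sum>i\<in>{..<d q} - {J q}. \<bar>y q i\<bar> powr p q)"
      using Jq by (simp add: sum.remove)
    also have "\<bar>y q (J q)\<bar> powr p q = t"
    proof -
      have "p q > 0" using p1 q by auto
      then show ?thesis using True t0 by (simp add: y_def powr_powr powr_one)
    qed
    also have "(\<Sum>i\<in>{..<d q} - {J q}. \<bar>y q i\<bar> powr p q) = (\<Sum>i\<in>{..<d q} - {J q}. \<bar>xs q i\<bar> powr p q)"
      by (intro sum.cong) (auto simp: y_def)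
    also have "\<dots> = (\<Sum>i<d q. \<bar>xs q i\<bar> powr p q) - \<bar>xs q (J q)\<bar> powr p q"
      using Jq by (simp add: sum_diff1)
    also have "\<dots> = (\<Sum>i<d q. \<bar>xs q i\<bar> powr p q)" using True by (simp add: K_def)
    finally have e: "(\<Sum>i<d q. \<bar>y q i\<bar> powr p q) = t + (\<Sum>i<d q. \<bar>xs q i\<bar> powr p q)" .
    have "pnorm (p q) (d q) (y q) = (t + (\<Sum>i<d q. \<bar>xs q i\<bar> powr p q)) powr (1 / p q)"
      unfolding pnorm_def e ..
    also have "\<dots> \<le> (1 + t) powr (1 / p q)"
    proof (rule powr_mono2)
      show "0 \<le> 1 / p q" using p1 q by (auto intro: less_imp_le)
      have "0 \<le> (\<Sum>i<d q. \<bar>xs q i\<bar> powr p q)" by (intro sum_nonneg) auto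
      then show "0 \<le> t + (\<Sum>i<d q. \<bar>xs q i\<bar> powr p q)" using t0 by simp
      show "t + (\<Sum>i<d q. \<bar>xs q i\<bar> powr p q) \<le> 1 + t" using xB q by auto
    qed
    finally show ?thesis using True by (simp add: g_def)
  next
    case False
    have "y q = xs q" using False by (auto simp: y_def)
    moreover have "pnorm (p q) (d q) (xs q) \<le> 1" using xB q p1 by (intro pnorm_le1) auto
    ultimately show ?thesis using False by (simp add: g_def)
  qed
  have Gp: "(\<Prod>q<m. g q) = (1 + t) powr s"
  proof -
    have "(\<Prod>q<m. g q) = (\<Prod>q\<in>{..<m} - K. g q) * (\<Prod>q\<in>K. g q)"
      using Km by (intro prod.subset_diff) auto
    also have "(\<Prod>q\<in>{..<m} - K. g q) = 1" by (intro prod.neutral) (auto simp: g_def)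
    also have "(\<Prod>q\<in>K. g q) = (\<Prod>q\<in>K. (1 + t) powr (1 / p q))"
      by (intro prod.cong) (auto simp: g_def)
    also have "\<dots> = (1 + t) powr s" unfolding s_def using t0 by (simp add: powr_sum)
    finally show ?thesis by simp
  qed
  have Den: "(\<Prod>q<m. pnorm (p q) (d q) (y q)) \<le> (1 + t) powr s"
    unfolding Gp[symmetric] using pn_le by (intro prod_mono) (auto simp: pnorm_def)
  have Dpos: "0 < (\<Prod>q<m. pnorm (p q) (d q) (y q))"
  proof (intro prod_pos ballI)
    fix q assume "q \<in> {..<m}"
    then obtain i where "i < d q" "y q i \<noteq> 0" using yadm unfolding admissible_def by auto
    then show "0 < pnorm (p q) (d q) (y q)" using p1 \<open>q \<in> {..<m}\<close> by (intro pnorm_pos) auto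
  qed
  have "(1 + t) powr s \<le> (1 + t) powr 1" using s1 t0 by (intro powr_mono) auto
  then have pw: "(1 + t) powr s \<le> 1 + t" using t0 by (simp add: powr_one)
  have "Qfun m d p f y \<le> M" by (rule bound[OF yadm])
  then have "\<bar>mform m d f y\<bar> \<le> M * (\<Prod>q<m. pnorm (p q) (d q) (y q))"
    unfolding Qfun_def using Dpos by (simp add: pos_divide_le_eq)
  also have "\<dots> \<le> M * (1 + t)" using Den pw Mpos by (intro mult_left_mono) auto
  finally have "mform m d f y \<le> M + M * t" by (simp add: algebra_simps)
  with \<open>mform m d f y \<ge> M + c * t powr s\<close> tle show False by linarith
qed



lemma critical:
  fixes xs :: "nat \<Rightarrow> nat \<Rightarrow> real"
  assumes f0: "\<forall>J\<in>multi_idx m d. f J \<ge> 0" and p1: "\<forall>k<m. 1 < p k"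
    and dpos: "\<forall>k<m. d k \<ge> 1"
    and xpos: "\<And>q i. q < m \<Longrightarrow> i < d q \<Longrightarrow> 0 < xs q i"
    and bound: "\<And>y. admissible m d y \<Longrightarrow> Qfun m d p f y \<le> Qfun m d p f xs"
    and k: "k < m" and j: "j < d k"
  shows "((\<lambda>t. Qfun m d p f (xs(k := (xs k)(j := xs k j + t)))) has_real_derivative 0) (at 0)"
proof -
  define e where "e q i t = xs q i + (if q = k \<and> i = j then t else 0)" for q i and t :: real
  define G where "G t = Qfun m d p f (\<lambda>q i. e q i t)" for t
  have gG: "(\<lambda>t. Qfun m d p f (xs(k := (xs k)(j := xs k j + t)))) = G"
  proof
    fix t
    have "xs(k := (xs k)(j := xs k j + t)) = (\<lambda>q i. e q i t)"
      by (auto simp: e_def fun_eq_iff)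
    then show "Qfun m d p f (xs(k := (xs k)(j := xs k j + t))) = G t" by (simp add: G_def)
  qed
  define \<delta> where "\<delta> = xs k j"
  have d0: "0 < \<delta>" unfolding \<delta>_def using xpos k j by auto
  have epos: "0 < e q i t" if "\<bar>t\<bar> < \<delta>" "q < m" "i < d q" for q i t
    using xpos[OF that(2,3)] that(1) by (auto simp: e_def \<delta>_def)
  have e0: "(\<lambda>q i. e q i 0) = xs" by (auto simp: e_def fun_eq_iff)
  define num where "num t = (\<Sum>J\<in>multi_idx m d. f J * (\<Prod>q<m. e q (J q) t))" for t
  define S where "S q t = (\<Sum>i<d q. e q i t powr p q)" for q t
  define den where "den t = (\<Prod>q<m. S q t powr (1 / p q))" for t
  define h where "h t = num t / den t" for t
  have Spos: "0 < S q t" if "\<bar>t\<bar> < \<delta>" "q < m" for q t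
  proof -
    have "0 < d q" using dpos that by auto
    then show ?thesis unfolding S_def using epos[OF that(1,2)]
      by (intro sum_pos2[of _ 0]) (auto, metis less_irrefl)
  qed
  have hG: "h t = G t" if "\<bar>t\<bar> < \<delta>" for t
  proof -
    have "0 \<le> mform m d f (\<lambda>q i. e q i t)"
      using epos[OF that] by (intro mform_nonneg[OF f0]) (auto intro: less_imp_le)
    moreover have "mform m d f (\<lambda>q i. e q i t) = num t" by (simp add: mform_def num_def)
    moreover have "(\<Prod>q<m. pnorm (p q) (d q) (\<lambda>i. e q i t)) = den t"
      unfolding den_def pnorm_def S_def
      using epos[OF that] by (intro prod.cong refl arg_cong2[where f="(powr)"] sum.cong) (auto intro: abs_of_pos)
    ultimately show ?thesis unfolding h_def G_def Qfun_def by simp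
  qed
  have de: "\<exists>D. DERIV (e q i) 0 :> D" for q i
    unfolding e_def by (cases "q = k \<and> i = j") (auto intro!: derivative_eq_intros)
  have dnum: "\<exists>D. DERIV num 0 :> D"
    unfolding num_def
    by (intro ex_deriv_sum finite_multi_idx ballI ex_deriv_cmult ex_deriv_prod de)
  have dS: "\<exists>D. DERIV (S q) 0 :> D" if "q < m" for q
    unfolding S_def
  proof (intro ex_deriv_sum ballI finite_lessThan)
    fix i assume "i \<in> {..<d q}"
    then have "0 < e q i 0" using epos[of 0 q i] d0 that by auto
    moreover obtain D where "DERIV (e q i) 0 :> D" using de by blast
    ultimately show "\<exists>D. DERIV (\<lambda>t. e q i t powr p q) 0 :> D" by (intro ex_deriv_powr)
  qed
  have dden: "\<exists>D. DERIV den 0 :> D"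
    unfolding den_def
  proof (intro ex_deriv_prod ballI)
    fix q assume "q \<in> {..<m}"
    then obtain D where "DERIV (S q) 0 :> D" using dS by blast
    moreover have "0 < S q 0" using Spos[of 0 q] d0 \<open>q \<in> {..<m}\<close> by auto
    ultimately show "\<exists>D. DERIV (\<lambda>t. S q t powr (1 / p q)) 0 :> D" by (intro ex_deriv_powr)
  qed
  have den0: "den 0 \<noteq> 0"
  proof -
    have "0 < den 0" unfolding den_def using Spos[of 0] d0 by (intro prod_pos) (auto, metis less_irrefl)
    then show ?thesis by simp
  qed
  obtain D where Dh: "DERIV h 0 :> D"
    using ex_deriv_divide[OF dnum dden den0] unfolding h_def by blast
  have DG: "DERIV G 0 :> D"
    by (rule has_field_derivative_transform_within[OF Dh d0]) (auto simp: hG dist_real_def)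
  have "D = 0"
  proof (rule DERIV_local_max[OF DG d0], intro allI impI)
    fix y :: real assume "\<bar>0 - y\<bar> < \<delta>"
    then have y: "\<bar>y\<bar> < \<delta>" by simp
    have "admissible m d (\<lambda>q i. e q i y)"
      unfolding admissible_def
    proof (intro allI impI)
      fix q assume q: "q < m"
      then have "0 < d q" using dpos by auto
      then show "\<exists>i<d q. e q i y \<noteq> 0" using epos[OF y q, of 0] by (intro exI[of _ 0]) auto
    qed
    then have "G y \<le> Qfun m d p f xs" unfolding G_def by (rule bound)
    then show "G y \<le> G 0" by (simp add: G_def e0)
  qed
  then show ?thesis using DG gG by simp
qed



lemma rtranclp_cross:
  assumes "R\<^sup>*\<^sup>* u v" "P u" "\<not> P v"
  shows "\<exists>a b. R a b \<and> P a \<and> \<not> P b"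
  using assms by (induction rule: rtranclp_induct) auto

lemma compact_B:
  assumes p0: "\<forall>k<m. 0 < p k"
  shows "compact {x. inB m d p x}"
proof -
  define C where "C q i = (if q < m \<and> i < d q then {-1..1::real} else {0})" for q i
  define Box where "Box = PiE UNIV (\<lambda>q. PiE UNIV (\<lambda>i. C q i))"
  define Cl where "Cl = (\<Inter>q\<in>{..<m}. {x::nat\<Rightarrow>nat\<Rightarrow>real. (\<Sum>i<d q. \<bar>x q i\<bar> powr p q) \<le> 1})"
  have cB: "compact Box" unfolding Box_def by (rule compact_box) (auto simp: C_def)
  have cont: "continuous_on UNIV (\<lambda>x::nat\<Rightarrow>nat\<Rightarrow>real. (\<Sum>i<d q. \<bar>x q i\<bar> powr p q))" if "q < m" for q
    using p0 that by (intro continuous_on_sum continuous_on_powr' continuous_intros) auto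
  have cCl: "closed Cl" unfolding Cl_def
    by (intro closed_INT ballI closed_Collect_le cont continuous_on_const) auto
  have "{x. inB m d p x} = Box \<inter> Cl"
  proof (intro equalityI subsetI)
    fix x assume "x \<in> {x. inB m d p x}"
    then have x: "inB m d p x" by simp
    have "x q i \<in> C q i" for q i
    proof (cases "q < m \<and> i < d q")
      case True
      have "\<bar>x q i\<bar> powr p q \<le> (\<Sum>i<d q. \<bar>x q i\<bar> powr p q)"
        using True by (intro member_le_sum) auto
      also have "\<dots> \<le> 1" using x True by (auto simp: inB_def)
      finally have "\<bar>x q i\<bar> \<le> 1" using p0 True
        by (metis gr_one_powr not_le)
      then show ?thesis using True by (auto simp: C_def)
    next
      case False then show ?thesis using x by (auto simp: C_def inB_def)
    qed
    then show "x \<in> Box \<inter> Cl" using x by (auto simp: Box_def Cl_def inB_def PiE_iff)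
  next
    fix x assume "x \<in> Box \<inter> Cl"
    then have h: "\<And>q i. x q i \<in> C q i" and h2: "\<forall>q<m. (\<Sum>i<d q. \<bar>x q i\<bar> powr p q) \<le> 1"
      by (auto simp: Box_def Cl_def PiE_iff)
    have "inB m d p x" unfolding inB_def
    proof (intro conjI allI impI)
      fix q i assume "\<not> (q < m \<and> i < d q)"
      then show "x q i = 0" using h[of q i] by (auto simp: C_def split: if_splits)
    qed (use h2 in auto)
    then show "x \<in> {x. inB m d p x}" by simp
  qed
  then show ?thesis using cB cCl by (simp add: compact_Int_closed)
qed

lemma cont_mform: "continuous_on S (mform m d f)"
  unfolding mform_def by (intro continuous_intros)

lemma mform_indicator:
  assumes J0: "J0 \<in> multi_idx m d"
  shows "mform m d f (\<lambda>q i. if q < m \<and> i = J0 q then 1 else 0) = f J0"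
proof -
  have "(\<Prod>q<m. (if q < m \<and> J q = J0 q then 1 else 0)) = (if J = J0 then 1 else (0::real))"
    if J: "J \<in> multi_idx m d" for J
  proof (cases "J = J0")
    case True then show ?thesis by simp
  next
    case False
    then obtain q where q: "J q \<noteq> J0 q" by auto
    have "q < m"
    proof (rule ccontr)
      assume "\<not> q < m"
      then show False using J J0 q unfolding multi_idx_def by (auto simp: PiE_def extensional_def)
    qed
    then have "(\<Prod>q<m. (if q < m \<and> J q = J0 q then 1 else (0::real))) = 0"
      using q by (intro prod_zero) auto
    then show ?thesis using False by simp
  qed
  then have "mform m d f (\<lambda>q i. if q < m \<and> i = J0 q then 1 else 0)
      = (\<Sum>J\<in>multi_idx m d. f J * (if J = J0 then 1 else 0))"
    unfolding mform_def by (intro sum.cong) auto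
  also have "\<dots> = (\<Sum>J\<in>multi_idx m d. if J = J0 then f J else 0)" by (intro sum.cong) auto
  also have "\<dots> = f J0" using J0 finite_multi_idx[of m d] by (simp add: sum.delta')
  finally show ?thesis .
qed



theorem theorem5:
  fixes m :: nat and d :: "nat \<Rightarrow> nat" and p :: "nat \<Rightarrow> real"
    and f :: "(nat \<Rightarrow> nat) \<Rightarrow> real"
  assumes "m \<ge> 2"
    and "\<forall>k<m. d k \<ge> 1"
    and "\<forall>k<m. 1 < p k"
    and "\<forall>J\<in>multi_idx m d. f J \<ge> 0"
    and "weakly_irreducible m d f"
    and "\<exists>i<m. \<forall>k<m. k \<noteq> i \<longrightarrow> real (m - 1) * (p i / (p i - 1)) \<le> p k"
  shows "\<exists>x. (\<forall>k<m. \<forall>j<d k. x k j > 0) \<and> singular_vector m d p f x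
             \<and> Qfun m d p f x = tnorm m d p f"
proof -
  note m2 = assms(1) and dpos = assms(2) and p1 = assms(3) and f0 = assms(4)
    and wi = assms(5)
  obtain i where i: "i < m" and hc: "\<forall>k<m. k \<noteq> i \<longrightarrow> real (m - 1) * (p i / (p i - 1)) \<le> p k"
    using assms(6) by blast
  have p0: "\<forall>k<m. 0 < p k" using p1 by auto
  have zB: "inB m d p (\<lambda>q i. 0)" unfolding inB_def using p0 by simp
  obtain x0 where x0: "x0 \<in> {x. inB m d p x}" and x0max: "\<forall>z\<in>{x. inB m d p x}. mform m d f z \<le> mform m d f x0"
    using continuous_attains_sup[OF compact_B[OF p0] _ cont_mform] zB by blast
  define xs where "xs q i = \<bar>x0 q i\<bar>" for q i
  have xsB: "inB m d p xs" using x0 by (auto simp: inB_def xs_def)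
  have xnn: "\<And>q i. 0 \<le> xs q i" by (simp add: xs_def)
  define M where "M = mform m d f xs"
  have maxB: "\<And>z. inB m d p z \<Longrightarrow> mform m d f z \<le> M"
  proof -
    fix z assume "inB m d p z"
    then have "mform m d f z \<le> mform m d f x0" using x0max by auto
    also have "\<dots> \<le> \<bar>mform m d f x0\<bar>" by simp
    also have "\<dots> \<le> M" unfolding M_def xs_def by (rule abs_mform_le[OF f0])
    finally show "mform m d f z \<le> M" .
  qed
  have v0: "(0, 0) \<in> wi_vertices m d" "(1, 0) \<in> wi_vertices m d"
  proof -
    have "d 0 \<ge> 1" "d 1 \<ge> 1" using m2 dpos by auto
    then show "(0, 0) \<in> wi_vertices m d" "(1, 0) \<in> wi_vertices m d"
      using m2 by (auto simp: wi_vertices_def)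
  qed
  then have "(wi_edge m d f)\<^sup>*\<^sup>* (0, 0) (1, 0)" using wi unfolding weakly_irreducible_def by blast
  then obtain w where "wi_edge m d f (0, 0) w" by (rule converse_rtranclpE) auto
  then obtain J0 where J0: "J0 \<in> multi_idx m d" "f J0 > 0" unfolding wi_edge_def by blast
  have "inB m d p (\<lambda>q i. if q < m \<and> i = J0 q then 1 else 0)"
    unfolding inB_def
  proof (intro conjI allI impI)
    fix q i assume "\<not> (q < m \<and> i < d q)"
    then show "(if q < m \<and> i = J0 q then 1 else 0) = (0::real)"
      using multi_idx_mem[OF J0(1)] by auto
  next
    fix q assume q: "q < m"
    have "(\<Sum>ia<d q. \<bar>if q < m \<and> ia = J0 q then 1 else 0\<bar> powr p q)
        = (\<Sum>ia<d q. if ia = J0 q then 1 else (0::real))"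
      using q by (intro sum.cong) auto
    also have "\<dots> = 1" using multi_idx_mem[OF J0(1) q] by (simp add: sum.delta')
    finally show "(\<Sum>ia<d q. \<bar>if q < m \<and> ia = J0 q then 1 else 0\<bar> powr p q) \<le> 1" by simp
  qed
  from maxB[OF this] have "f J0 \<le> M" by (simp add: mform_indicator[OF J0(1)])
  then have Mpos: "0 < M" using J0 by simp
  have xadm: "admissible m d xs"
    unfolding admissible_def
  proof (intro allI impI, rule ccontr)
    fix q assume q: "q < m" and "\<not> (\<exists>j<d q. xs q j \<noteq> 0)"
    then have z: "\<And>j. j < d q \<Longrightarrow> xs q j = 0" by auto
    have "M = 0" unfolding M_def mform_def
    proof (intro sum.neutral ballI)
      fix J assume "J \<in> multi_idx m d"
      then have "J q < d q" using q by (rule multi_idx_mem)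
      then have "(\<Prod>k<m. xs k (J k)) = 0" using z q by (intro prod_zero) auto
      then show "f J * (\<Prod>k<m. xs k (J k)) = 0" by simp
    qed
    then show False using Mpos by simp
  qed
  have bound: "\<And>y. admissible m d y \<Longrightarrow> Qfun m d p f y \<le> M"
    using Q_bound[OF f0 p0 maxB] by blast
  have xB: "\<forall>q<m. (\<Sum>i<d q. \<bar>xs q i\<bar> powr p q) \<le> 1" using xsB by (simp add: inB_def)
  have xpos: "0 < xs q j" if q: "q < m" and j: "j < d q" for q j
  proof (rule ccontr)
    assume "\<not> 0 < xs q j"
    then have z: "xs q j = 0" using xnn[of q j] by simp
    obtain j1 where j1: "j1 < d q" "xs q j1 \<noteq> 0" using xadm q unfolding admissible_def by blast
    have "(q, j) \<in> wi_vertices m d" "(q, j1) \<in> wi_vertices m d" using q j j1 by (auto simp: wi_vertices_def)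
    then have "(wi_edge m d f)\<^sup>*\<^sup>* (q, j) (q, j1)" using wi unfolding weakly_irreducible_def by blast
    from rtranclp_cross[OF this, of "\<lambda>v. xs (fst v) (snd v) = 0"] z j1
    obtain a b where ab: "wi_edge m d f a b" "xs (fst a) (snd a) = 0" "xs (fst b) (snd b) \<noteq> 0" by auto
    then obtain J where J: "J \<in> multi_idx m d" "J (fst a) = snd a" "J (fst b) = snd b" "f J > 0"
      and ka: "fst a < m" and kb: "fst b < m"
      unfolding wi_edge_def wi_vertices_def by auto
    have slt: "(\<Sum>q\<in>{q\<in>{..<m}. xs q (J q) = 0}. 1 / p q) < 1"
      using ab J kb by (intro sum_inv_lt1[OF m2 p1 i hc, of _ "fst b"]) auto
    show False
      using perturb[OF f0 p1 xnn xB xadm M_def[symmetric] Mpos bound J(1) J(4) ka _ slt] ab J by auto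
  qed
  have QM: "Qfun m d p f xs = M"
  proof (rule antisym)
    show "Qfun m d p f xs \<le> M" by (rule bound[OF xadm])
    have P1: "(\<Prod>q<m. pnorm (p q) (d q) (xs q)) \<le> 1"
    proof (intro prod_le_1 ballI conjI)
      fix q assume "q \<in> {..<m}"
      then show "pnorm (p q) (d q) (xs q) \<le> 1" using xB p0 by (intro pnorm_le1) auto
    qed (simp add: pnorm_def)
    have P0: "0 < (\<Prod>q<m. pnorm (p q) (d q) (xs q))"
    proof (intro prod_pos ballI)
      fix q assume "q \<in> {..<m}"
      then obtain j where "j < d q" "xs q j \<noteq> 0" using xadm unfolding admissible_def by auto
      then show "0 < pnorm (p q) (d q) (xs q)" using p0 \<open>q \<in> {..<m}\<close> by (intro pnorm_pos) auto
    qed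
    have "M \<le> M / (\<Prod>q<m. pnorm (p q) (d q) (xs q))"
      using P0 P1 Mpos by (simp add: le_divide_eq)
    then show "M \<le> Qfun m d p f xs" unfolding Qfun_def M_def[symmetric] using Mpos by simp
  qed
  have tn: "tnorm m d p f = M"
    unfolding tnorm_def
  proof (rule cSup_eq_maximum)
    show "M \<in> {Qfun m d p f x |x. admissible m d x}" using QM xadm by auto
  qed (use bound in auto)
  have crit: "critical_Q m d p f xs"
    unfolding critical_Q_def
  proof (intro allI impI)
    fix k j assume kj: "k < m" "j < d k"
    have bd: "\<And>y. admissible m d y \<Longrightarrow> Qfun m d p f y \<le> Qfun m d p f xs" using bound QM by simp
    show "((\<lambda>t. Qfun m d p f (xs(k := (xs k)(j := xs k j + t)))) has_real_derivative 0) (at 0)"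
      by (rule critical[OF f0 p1 dpos xpos bd kj])
  qed
  show ?thesis
  proof (intro exI[of _ xs] conjI allI impI)
    show "singular_vector m d p f xs" unfolding singular_vector_def
      using xadm Mpos crit unfolding M_def by auto
    show "Qfun m d p f xs = tnorm m d p f" using QM tn by simp
  qed (use xpos in auto)
qed

end
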